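(* Suppose $b=0$ and $\alpha(a\alpha+b\beta)\neq0$, i.e. $\alpha\neq0$ and $a\neq0$. Then the only control set of $\Sigma$ is the whole group $G$.
   Context: Let $G=\{(x,y)\in\mathbb{R}^2:x>0\}$. Fix $\Omega=[u_*,u^*]$ with $u_*<0<u^*$. The admissible controls $\mathcal U$ are the piecewise constant functions $\mathbb{R}\to\Omega$. The system is $\Sigma$: $\dot x=u\alpha x$, $\dot y=a(x-1)+by+ux\beta$, with $(a,b),(\alpha,\beta)\in\mathbb{R}^2\setminus\{(0,0)\}$. We write $\varphi(t,p,u)$ for its solutions and $\mathcal O^+(p)=\{\varphi(t,p,u):t\ge0,u\in\mathcal U\}$; closures are taken in $G$. A control set is a subset $\mathcal C\subset G$ that is maximal with respect to inclusion among the sets satisfying both of the following: (i) every $p\in\mathcal C$ admits $u\in\mathcal U$ with $\varphi(t,p,u)\in\mathcal C$ for all $t\ge0$; (ii) $\mathcal C\subset\operatorname{cl}\mathcal O^+(p)$ for all $p\in\mathcal C$. *)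

theory Defs
  imports "HOL-Analysis.Analysis"
begin

definition G :: "(real \<times> real) set" where
  "G = {p. fst p > 0}"

definition locfin :: "real set \<Rightarrow> bool" where
  "locfin S \<longleftrightarrow> (\<forall>T. finite (S \<inter> {-T..T}))"

text \<open>Admissible controls: piecewise constant functions R -> [umin, umax].
  Piecewise constant: outside a locally finite set of switching points the control
  is locally constant.\<close>
definition admissible :: "real \<Rightarrow> real \<Rightarrow> (real \<Rightarrow> real) \<Rightarrow> bool" where
  "admissible umin umax u \<longleftrightarrow>
     (\<forall>t. u t \<in> {umin..umax}) \<and>
     (\<exists>S. locfin S \<and> (\<forall>t. t \<notin> S \<longrightarrow> (\<exists>e>0. \<forall>s. \<bar>s - t\<bar> < e \<longrightarrow> u s = u t)))"

definition field :: "real \<Rightarrow> real \<Rightarrow> real \<Rightarrow> real \<Rightarrow> real \<times> real \<Rightarrow> real \<Rightarrow> real \<times> real" where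
  "field a b \<alpha> \<beta> p v = (v * \<alpha> * fst p, a * (fst p - 1) + b * snd p + v * fst p * \<beta>)"

text \<open>gamma is the solution t |-> phi(t,p,u) (t \<ge> 0) of Sigma starting at p under control u:
  continuous on [0,\<infinity>), gamma 0 = p, and satisfying the ODE at every positive time
  outside a locally finite set (the switching times of u).
  Since the system is affine in the state, such a solution exists and is unique.\<close>
definition is_solution :: "real \<Rightarrow> real \<Rightarrow> real \<Rightarrow> real \<Rightarrow> real \<times> real \<Rightarrow> (real \<Rightarrow> real)
                          \<Rightarrow> (real \<Rightarrow> real \<times> real) \<Rightarrow> bool" where
  "is_solution a b \<alpha> \<beta> p u \<gamma> \<longleftrightarrow>
     \<gamma> 0 = p \<and> continuous_on {0..} \<gamma> \<and>
     (\<exists>S. locfin S \<and> (\<forall>t>0. t \<notin> S \<longrightarrow>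
        (\<gamma> has_vector_derivative field a b \<alpha> \<beta> (\<gamma> t) (u t)) (at t)))"

definition orbit_pos :: "real \<Rightarrow> real \<Rightarrow> real \<Rightarrow> real \<Rightarrow> real \<Rightarrow> real \<Rightarrow> real \<times> real
                          \<Rightarrow> (real \<times> real) set" where
  "orbit_pos umin umax a b \<alpha> \<beta> p =
     {\<gamma> t | t u \<gamma>. t \<ge> 0 \<and> admissible umin umax u \<and> is_solution a b \<alpha> \<beta> p u \<gamma>}"

definition cs_pre :: "real \<Rightarrow> real \<Rightarrow> real \<Rightarrow> real \<Rightarrow> real \<Rightarrow> real \<Rightarrow> (real \<times> real) set \<Rightarrow> bool" where
  "cs_pre umin umax a b \<alpha> \<beta> C \<longleftrightarrow>
     C \<subseteq> G \<and>
     (\<forall>p\<in>C. \<exists>u \<gamma>. admissible umin umax u \<and> is_solution a b \<alpha> \<beta> p u \<gamma> \<and>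
                   (\<forall>t\<ge>0. \<gamma> t \<in> C)) \<and>
     (\<forall>p\<in>C. C \<subseteq> closure (orbit_pos umin umax a b \<alpha> \<beta> p) \<inter> G)"

definition control_set :: "real \<Rightarrow> real \<Rightarrow> real \<Rightarrow> real \<Rightarrow> real \<Rightarrow> real \<Rightarrow> (real \<times> real) set \<Rightarrow> bool" where
  "control_set umin umax a b \<alpha> \<beta> C \<longleftrightarrow>
     cs_pre umin umax a b \<alpha> \<beta> C \<and>
     (\<forall>D. cs_pre umin umax a b \<alpha> \<beta> D \<and> C \<subseteq> D \<longrightarrow> D = C)"

end

theory Submission
  imports Defs
begin

definition Eint :: "real \<Rightarrow> real \<Rightarrow> real" where
  "Eint r s = (if r = 0 then s else (exp (r * s) - 1) / r)"

lemma Eint_deriv: "(Eint r has_real_derivative exp (r * s)) (at s)"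
proof (cases "r = 0")
  case True
  then show ?thesis unfolding Eint_def by (auto intro!: derivative_eq_intros)
next
  case False
  have "((\<lambda>s. (exp (r * s) - 1) / r) has_real_derivative exp (r * s) * r / r) (at s)"
    by (auto intro!: derivative_eq_intros)
  then show ?thesis using False unfolding Eint_def by simp
qed

definition seg :: "real \<Rightarrow> real \<Rightarrow> real \<Rightarrow> real \<Rightarrow> real \<Rightarrow> real \<Rightarrow> real \<Rightarrow> real \<times> real" where
  "seg a \<alpha> \<beta> v x y s = (x * exp (v * \<alpha> * s), y + (\<beta>/\<alpha>) * x*(exp (v * \<alpha> * s) - 1) + a * (x * Eint (v * \<alpha>) s - s))"

lemma seg_deriv:
  assumes "\<alpha> \<noteq> 0"
  shows "(seg a \<alpha> \<beta> v x y has_vector_derivative field a 0 \<alpha> \<beta> (seg a \<alpha> \<beta> v x y s) v) (at s)"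
proof -
  have d1: "((\<lambda>s. x * exp (v * \<alpha> * s)) has_real_derivative x * (exp (v * \<alpha> * s) * (v * \<alpha>))) (at s)"
    by (auto intro!: derivative_eq_intros)
  have d2: "((\<lambda>s. y + (\<beta>/\<alpha>) * x*(exp (v * \<alpha> * s) - 1) + a * (x * Eint (v * \<alpha>) s - s)) has_real_derivative
      (\<beta>/\<alpha>) * x*(exp (v * \<alpha> * s) * (v * \<alpha>)) + a * (x * exp (v * \<alpha> * s) - 1)) (at s)"
    by (auto intro!: derivative_eq_intros Eint_deriv)
  have "(seg a \<alpha> \<beta> v x y has_vector_derivative
     (x * (exp (v * \<alpha> * s) * (v * \<alpha>)), (\<beta>/\<alpha>) * x*(exp (v * \<alpha> * s) * (v * \<alpha>)) + a * (x * exp (v * \<alpha> * s) - 1))) (at s)"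
    unfolding seg_def[abs_def]
    by (rule has_vector_derivative_Pair; simp only: has_real_derivative_iff_has_vector_derivative[symmetric]; rule d1 d2)
  moreover have "field a 0 \<alpha> \<beta> (seg a \<alpha> \<beta> v x y s) v =
     (x * (exp (v * \<alpha> * s) * (v * \<alpha>)), (\<beta>/\<alpha>) * x*(exp (v * \<alpha> * s) * (v * \<alpha>)) + a * (x * exp (v * \<alpha> * s) - 1))"
    using assms unfolding field_def seg_def by (simp add: field_simps)
  ultimately show ?thesis by simp
qed

lemma locfin_empty: "locfin {}" unfolding locfin_def by simp

lemma locfin_Un: "locfin A \<Longrightarrow> locfin B \<Longrightarrow> locfin (A \<union> B)"
  unfolding locfin_def by (simp add: Int_Un_distrib2)

lemma locfin_single: "locfin {c}" unfolding locfin_def by simp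

lemma locfin_shift:
  assumes "locfin S" shows "locfin ((+) c ` S)"
  unfolding locfin_def
proof
  fix T
  have "((+) c ` S) \<inter> {-T..T} \<subseteq> (+) c ` (S \<inter> {-(T+\<bar>c\<bar>)..T+\<bar>c\<bar>})"
  proof
    fix z assume "z \<in> ((+) c ` S) \<inter> {-T..T}"
    then obtain s where s: "s \<in> S" "z = c + s" "-T \<le> c + s" "c + s \<le> T" by auto
    have "-\<bar>c\<bar> \<le> c" "c \<le> \<bar>c\<bar>" by auto
    then have "s \<in> S \<inter> {-(T+\<bar>c\<bar>)..T+\<bar>c\<bar>}" using s by auto
    then show "z \<in> (+) c ` (S \<inter> {-(T+\<bar>c\<bar>)..T+\<bar>c\<bar>})" using s(2) by blast
  qed
  moreover have "finite ((+) c ` (S \<inter> {-(T+\<bar>c\<bar>)..T+\<bar>c\<bar>}))"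
    using assms unfolding locfin_def by blast
  ultimately show "finite ((+) c ` S \<inter> {-T..T})" by (rule finite_subset)
qed

lemma admissible_const: "v \<in> {umin..umax} \<Longrightarrow> admissible umin umax (\<lambda>_. v)"
  unfolding admissible_def using locfin_empty zero_less_one by blast

lemma concat_adm:
  assumes "admissible umin umax u1" "admissible umin umax u2"
  shows "admissible umin umax (\<lambda>t. if t < T then u1 t else u2 (t - T))"
proof -
  obtain S1 where S1: "locfin S1" "\<forall>t. t \<notin> S1 \<longrightarrow> (\<exists>e>0. \<forall>s. \<bar>s - t\<bar> < e \<longrightarrow> u1 s = u1 t)"
    using assms(1) unfolding admissible_def by blast
  obtain S2 where S2: "locfin S2" "\<forall>t. t \<notin> S2 \<longrightarrow> (\<exists>e>0. \<forall>s. \<bar>s - t\<bar> < e \<longrightarrow> u2 s = u2 t)"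
    using assms(2) unfolding admissible_def by blast
  let ?u = "\<lambda>t. if t < T then u1 t else u2 (t - T)"
  have "\<exists>e>0. \<forall>s. \<bar>s - t\<bar> < e \<longrightarrow> ?u s = ?u t" if t: "t \<notin> S1 \<union> {T} \<union> (+) T ` S2" for t
  proof (cases "t < T")
    case True
    then obtain e where e: "e > 0" "\<forall>s. \<bar>s - t\<bar> < e \<longrightarrow> u1 s = u1 t" using S1 t by blast
    show ?thesis
    proof (rule exI[of _ "min e (T - t)"], intro conjI allI impI)
      show "min e (T - t) > 0" using e True by auto
      fix s assume s: "\<bar>s - t\<bar> < min e (T - t)"
      then have "s < T" "\<bar>s - t\<bar> < e" by auto
      then have "u1 s = u1 t" using e(2) by blast
      then show "?u s = ?u t" using True \<open>s < T\<close> by simp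
    qed
  next
    case False
    then have tT: "t > T" using t by auto
    have "t - T \<notin> S2"
    proof
      assume "t - T \<in> S2"
      then have "T + (t - T) \<in> (+) T ` S2" by (rule imageI)
      then show False using t by simp
    qed
    then obtain e where e: "e > 0" "\<forall>s. \<bar>s - (t - T)\<bar> < e \<longrightarrow> u2 s = u2 (t - T)" using S2 by blast
    show ?thesis
    proof (rule exI[of _ "min e (t - T)"], intro conjI allI impI)
      show "min e (t - T) > 0" using e tT by auto
      fix s assume "\<bar>s - t\<bar> < min e (t - T)"
      then have "\<not> s < T" "\<bar>(s - T) - (t - T)\<bar> < e" by auto
      then have "u2 (s - T) = u2 (t - T)" using e(2) by blast
      then show "?u s = ?u t" using tT \<open>\<not> s < T\<close> by simp
    qed
  qed
  moreover have "locfin (S1 \<union> {T} \<union> (+) T ` S2)"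
    using S1 S2 by (intro locfin_Un locfin_single locfin_shift)
  moreover have "\<forall>t. ?u t \<in> {umin..umax}" using assms unfolding admissible_def by simp
  ultimately show ?thesis unfolding admissible_def by blast
qed

lemma concat_sol:
  assumes "is_solution a b \<alpha> \<beta> p u1 g1" "T \<ge> 0" "is_solution a b \<alpha> \<beta> (g1 T) u2 g2"
  shows "is_solution a b \<alpha> \<beta> p (\<lambda>t. if t < T then u1 t else u2 (t - T)) (\<lambda>t. if t \<le> T then g1 t else g2 (t - T))"
proof -
  let ?u = "\<lambda>t. if t < T then u1 t else u2 (t - T)"
  let ?g = "\<lambda>t. if t \<le> T then g1 t else g2 (t - T)"
  obtain S1 where S1: "locfin S1" "\<forall>t>0. t \<notin> S1 \<longrightarrow> (g1 has_vector_derivative field a b \<alpha> \<beta> (g1 t) (u1 t)) (at t)"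
    using assms(1) unfolding is_solution_def by blast
  obtain S2 where S2: "locfin S2" "\<forall>t>0. t \<notin> S2 \<longrightarrow> (g2 has_vector_derivative field a b \<alpha> \<beta> (g2 t) (u2 t)) (at t)"
    using assms(3) unfolding is_solution_def by blast
  have c1: "continuous_on {0..} g1" and c2: "continuous_on {0..} g2" and g20: "g2 0 = g1 T" and g10: "g1 0 = p"
    using assms(1,3) unfolding is_solution_def by auto
  have "continuous_on {0..T} ?g"
    by (rule continuous_on_eq[of _ g1]) (auto intro: continuous_on_subset[OF c1])
  moreover have "continuous_on {T..} ?g"
  proof (rule continuous_on_eq[of _ "g2 \<circ> (\<lambda>t. t - T)"])
    show "continuous_on {T..} (g2 \<circ> (\<lambda>t. t - T))"
      by (rule continuous_on_compose, intro continuous_intros, rule continuous_on_subset[OF c2]) auto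
    show "\<And>x. x \<in> {T..} \<Longrightarrow> (g2 \<circ> (\<lambda>t. t - T)) x = ?g x" using g20 by auto
  qed
  ultimately have "continuous_on ({0..T} \<union> {T..}) ?g"
    by (intro continuous_on_closed_Un) auto
  moreover have "{0..T} \<union> {T..} = {0::real..}" using assms(2) by auto
  ultimately have cont: "continuous_on {0..} ?g" by simp
  have der: "(?g has_vector_derivative field a b \<alpha> \<beta> (?g t) (?u t)) (at t)"
    if t: "t > 0" "t \<notin> S1 \<union> {T} \<union> (+) T ` S2" for t
  proof (cases "t < T")
    case True
    have "(g1 has_vector_derivative field a b \<alpha> \<beta> (g1 t) (u1 t)) (at t)" using S1 t by auto
    then have "(?g has_vector_derivative field a b \<alpha> \<beta> (g1 t) (u1 t)) (at t)"
      by (rule has_vector_derivative_transform_within_open[of _ _ _ "{..<T}"]) (use True in auto)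
    then show ?thesis using True by simp
  next
    case False
    then have tT: "t > T" using t by auto
    have "t - T \<notin> S2"
    proof
      assume "t - T \<in> S2"
      then have "T + (t - T) \<in> (+) T ` S2" by (rule imageI)
      then show False using t by simp
    qed
    then have "(g2 has_vector_derivative field a b \<alpha> \<beta> (g2 (t - T)) (u2 (t - T))) (at (t - T))"
      using S2 tT by auto
    moreover have "((\<lambda>s. s - T) has_vector_derivative 1) (at t)"
      by (auto intro!: derivative_eq_intros simp: has_real_derivative_iff_has_vector_derivative[symmetric])
    ultimately have "((g2 \<circ> (\<lambda>s. s - T)) has_vector_derivative 1 *\<^sub>R field a b \<alpha> \<beta> (g2 (t - T)) (u2 (t - T))) (at t)"
      using vector_diff_chain_at by blast
    then have "((g2 \<circ> (\<lambda>s. s - T)) has_vector_derivative field a b \<alpha> \<beta> (g2 (t - T)) (u2 (t - T))) (at t)"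
      by simp
    then have "(?g has_vector_derivative field a b \<alpha> \<beta> (g2 (t - T)) (u2 (t - T))) (at t)"
      by (rule has_vector_derivative_transform_within_open[of _ _ _ "{T<..}"]) (use tT in auto)
    then show ?thesis using tT by simp
  qed
  have "locfin (S1 \<union> {T} \<union> (+) T ` S2)"
    using S1 S2 by (intro locfin_Un locfin_single locfin_shift)
  moreover have "?g 0 = p" using g10 assms(2) by simp
  ultimately show ?thesis unfolding is_solution_def using cont der by blast
qed

definition reach where
  "reach umin umax a \<alpha> \<beta> p q \<longleftrightarrow> q \<in> orbit_pos umin umax a 0 \<alpha> \<beta> p"

lemma reach_trans:
  assumes "reach umin umax a \<alpha> \<beta> p q" "reach umin umax a \<alpha> \<beta> q r"
  shows "reach umin umax a \<alpha> \<beta> p r"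
proof -
  obtain t1 u1 g1 where 1: "t1 \<ge> 0" "admissible umin umax u1" "is_solution a 0 \<alpha> \<beta> p u1 g1" "q = g1 t1"
    using assms(1) unfolding reach_def orbit_pos_def by blast
  obtain t2 u2 g2 where 2: "t2 \<ge> 0" "admissible umin umax u2" "is_solution a 0 \<alpha> \<beta> q u2 g2" "r = g2 t2"
    using assms(2) unfolding reach_def orbit_pos_def by blast
  have sol2: "is_solution a 0 \<alpha> \<beta> (g1 t1) u2 g2" using 2(3) 1(4) by simp
  have g20: "g2 0 = q" using 2(3) unfolding is_solution_def by simp
  let ?u = "\<lambda>t. if t < t1 then u1 t else u2 (t - t1)"
  let ?g = "\<lambda>t. if t \<le> t1 then g1 t else g2 (t - t1)"
  have "admissible umin umax ?u" by (rule concat_adm[OF 1(2) 2(2)])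
  moreover have "is_solution a 0 \<alpha> \<beta> p ?u ?g" by (rule concat_sol[OF 1(3) 1(1) sol2])
  moreover have "r = ?g (t1 + t2)"
  proof (cases "t2 = 0")
    case True then show ?thesis using 1(4) 2(4) g20 by simp
  next
    case False then show ?thesis using 2(1,4) by simp
  qed
  moreover have "t1 + t2 \<ge> 0" using 1 2 by simp
  ultimately have "\<exists>t u \<gamma>. r = \<gamma> t \<and> 0 \<le> t \<and> admissible umin umax u \<and> is_solution a 0 \<alpha> \<beta> p u \<gamma>"
    by (intro exI[of _ "t1 + t2"] exI[of _ ?u] exI[of _ ?g]) blast
  then show ?thesis unfolding reach_def orbit_pos_def by blast
qed

lemma seg_sol:
  assumes "\<alpha> \<noteq> 0"
  shows "is_solution a 0 \<alpha> \<beta> (x, y) (\<lambda>_. v) (seg a \<alpha> \<beta> v x y)"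
proof -
  have "seg a \<alpha> \<beta> v x y 0 = (x, y)" unfolding seg_def Eint_def by simp
  moreover have "continuous_on {0..} (seg a \<alpha> \<beta> v x y)"
    using seg_deriv[OF assms] has_vector_derivative_continuous
    by (blast intro: continuous_at_imp_continuous_on)
  moreover have "\<forall>t>0. t \<notin> {} \<longrightarrow> (seg a \<alpha> \<beta> v x y has_vector_derivative
      field a 0 \<alpha> \<beta> (seg a \<alpha> \<beta> v x y t) v) (at t)"
    using seg_deriv[OF assms] by blast
  ultimately show ?thesis unfolding is_solution_def using locfin_empty by blast
qed

lemma seg_reach:
  assumes "\<alpha> \<noteq> 0" "v \<in> {umin..umax}" "s \<ge> 0"
  shows "reach umin umax a \<alpha> \<beta> (x, y) (seg a \<alpha> \<beta> v x y s)"
  unfolding reach_def orbit_pos_def using seg_sol[OF assms(1)] admissible_const[OF assms(2)] assms(3)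
  by blast

lemma wait_reach:
  assumes "\<alpha> \<noteq> 0" "umin \<le> 0" "0 \<le> umax" "s \<ge> 0"
  shows "reach umin umax a \<alpha> \<beta> (x, y) (x, y + a * (x - 1) * s)"
proof -
  have "seg a \<alpha> \<beta> 0 x y s = (x, y + a * (x - 1) * s)"
    unfolding seg_def Eint_def by (simp add: algebra_simps)
  then show ?thesis using seg_reach[OF assms(1) _ assms(4), of 0 umin umax a \<beta> x y] assms by simp
qed

lemma move_reach:
  assumes "\<alpha> \<noteq> 0" "umin < 0" "0 < umax" "x > 0" "x' > 0"
  defines "k \<equiv> min umax (- umin) * \<bar>\<alpha>\<bar>"
  shows "reach umin umax a \<alpha> \<beta> (x, y)
     (x', y + (\<beta>/\<alpha>) * (x' - x) + a * (\<bar>x' - x\<bar> - \<bar>ln (x' / x)\<bar>) / k)"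
proof -
  define c where "c = min umax (- umin)"
  have c: "c > 0" "c \<le> umax" "- c \<ge> umin" using assms unfolding c_def by auto
  have k: "k > 0" using c assms unfolding k_def c_def[symmetric] by simp
  have kc: "k = c * \<bar>\<alpha>\<bar>" unfolding k_def c_def ..
  show ?thesis
  proof (cases "x \<le> x'")
    case True
    define v where "v = k / \<alpha>"
    have va: "v * \<alpha> = k" using assms(1) unfolding v_def by simp
    have "\<bar>v\<bar> = c" unfolding v_def kc using assms(1) c by (simp add: abs_mult)
    then have vr: "v \<in> {umin..umax}" using c by auto
    define s where "s = ln (x' / x) / k"
    have l: "ln (x' / x) \<ge> 0" using True assms(4,5) by simp
    have s: "s \<ge> 0" using l k unfolding s_def by simp
    have e: "exp (v * \<alpha> * s) = x' / x" using va k assms(4,5) unfolding s_def by simp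
    have "seg a \<alpha> \<beta> v x y s = (x', y + (\<beta>/\<alpha>) * (x' - x) + a * (\<bar>x' - x\<bar> - \<bar>ln (x' / x)\<bar>) / k)"
    proof -
      have E: "Eint (v * \<alpha>) s = (x' / x - 1) / k" unfolding Eint_def using e va k by simp
      show ?thesis unfolding seg_def e E using True l assms(4) k assms(1)
        by (simp add: field_simps s_def)
    qed
    then show ?thesis using seg_reach[OF assms(1) vr s, of a \<beta> x y] by simp
  next
    case False
    define v where "v = - k / \<alpha>"
    have va: "v * \<alpha> = - k" using assms(1) unfolding v_def by simp
    have "\<bar>v\<bar> = c" unfolding v_def kc using assms(1) c by (simp add: abs_mult)
    then have vr: "v \<in> {umin..umax}" using c by auto
    define s where "s = - ln (x' / x) / k"
    have l: "ln (x' / x) \<le> 0" using False assms(4,5) by simp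
    have s: "s \<ge> 0" using l k unfolding s_def by (simp add: divide_nonpos_pos)
    have e: "exp (v * \<alpha> * s) = x' / x" using va k assms(4,5) unfolding s_def by simp
    have "seg a \<alpha> \<beta> v x y s = (x', y + (\<beta>/\<alpha>) * (x' - x) + a * (\<bar>x' - x\<bar> - \<bar>ln (x' / x)\<bar>) / k)"
    proof -
      have E: "Eint (v * \<alpha>) s = (x' / x - 1) / (- k)" unfolding Eint_def using e va k by simp
      show ?thesis unfolding seg_def e E using False l assms(4) k assms(1)
        by (simp add: field_simps s_def)
    qed
    then show ?thesis using seg_reach[OF assms(1) vr s, of a \<beta> x y] by simp
  qed
qed

lemma tele: "(c::real) * (p - q) + c * (r - p) + c * (s - r) = c * (s - q)"
  by (simp add: algebra_simps)

lemma controllable: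
  assumes "\<alpha> \<noteq> 0" "umin < 0" "0 < umax" "a \<noteq> 0" "x0 > 0" "x1 > 0"
  shows "reach umin umax a \<alpha> \<beta> (x0, y0) (x1, y1)"
proof -
  define k where "k = min umax (- umin) * \<bar>\<alpha>\<bar>"
  define D where "D = (\<lambda>x x'. a * (\<bar>x' - x\<bar> - \<bar>ln (x' / x)\<bar>) / k)"
  define B where "B = (\<lambda>x x'::real. (\<beta>/\<alpha>) * (x' - x))"
  have mv: "reach umin umax a \<alpha> \<beta> (x, y) (x', y + B x x' + D x x')" if "x > 0" "x' > 0" for x x' y
    using move_reach[OF assms(1-3) that, of a \<beta> y] unfolding B_def D_def k_def by simp
  have wt: "reach umin umax a \<alpha> \<beta> (x, y) (x, y + a * (x - 1) * s)" if "s \<ge> 0" for x y s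
    using wait_reach[OF assms(1) _ _ that] assms(2,3) by simp
  define X where "X = max x0 x1 + 2"
  define Y where "Y = (1/2::real)"
  have X: "X > 1" using assms(5,6) unfolding X_def by simp
  have Y: "Y > 0" "Y < 1" unfolding Y_def by auto
  define R where "R = y1 - y0 - (\<beta>/\<alpha>) * (x1 - x0) - D x0 X - D X Y - D Y x1"
  define s1 where "s1 = max 0 (R / (a * (X - 1)))"
  define s2 where "s2 = max 0 (R / (a * (Y - 1)))"
  have s12: "s1 \<ge> 0" "s2 \<ge> 0" unfolding s1_def s2_def by auto
  have key: "a * (X - 1) * s1 + a * (Y - 1) * s2 = R"
  proof (cases "R / a \<ge> 0")
    case True
    have e1: "R / (a * (X - 1)) = (R / a) / (X - 1)" by simp
    have "R / (a * (X - 1)) \<ge> 0" unfolding e1 by (rule divide_nonneg_pos) (use True X in auto)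
    then have "s1 = R / (a * (X - 1))" unfolding s1_def by simp
    moreover have e2: "R / (a * (Y - 1)) = (R / a) / (Y - 1)" by simp
    have "R / (a * (Y - 1)) \<le> 0" unfolding e2 by (rule divide_nonneg_neg) (use True Y in auto)
    then have "s2 = 0" unfolding s2_def by simp
    ultimately show ?thesis using X assms(4) by simp
  next
    case False
    have e1: "R / (a * (X - 1)) = (R / a) / (X - 1)" by simp
    have "R / (a * (X - 1)) \<le> 0" unfolding e1 by (rule divide_nonpos_pos) (use False X in auto)
    then have "s1 = 0" unfolding s1_def by simp
    moreover have e2: "R / (a * (Y - 1)) = (R / a) / (Y - 1)" by simp
    have "R / (a * (Y - 1)) \<ge> 0" unfolding e2 by (rule divide_nonpos_neg) (use False Y in auto)
    then have "s2 = R / (a * (Y - 1))" unfolding s2_def by simp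
    ultimately show ?thesis using Y assms(4) by simp
  qed
  define y2 where "y2 = y0 + B x0 X + D x0 X"
  define y3 where "y3 = y2 + a * (X - 1) * s1"
  define y4 where "y4 = y3 + B X Y + D X Y"
  define y5 where "y5 = y4 + a * (Y - 1) * s2"
  have "reach umin umax a \<alpha> \<beta> (x0, y0) (X, y2)" unfolding y2_def using mv assms(5) X by simp
  moreover have "reach umin umax a \<alpha> \<beta> (X, y2) (X, y3)" unfolding y3_def using wt s12 by simp
  moreover have "reach umin umax a \<alpha> \<beta> (X, y3) (Y, y4)" unfolding y4_def using mv Y X by simp
  moreover have "reach umin umax a \<alpha> \<beta> (Y, y4) (Y, y5)" unfolding y5_def using wt s12 by simp
  moreover have "reach umin umax a \<alpha> \<beta> (Y, y5) (x1, y5 + B Y x1 + D Y x1)" using mv Y assms(6) by simp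
  moreover have "y5 + B Y x1 + D Y x1 = y1"
  proof -
    have "B x0 X + B X Y + B Y x1 = (\<beta>/\<alpha>) * (x1 - x0)" 
      unfolding B_def by (rule tele)
    then show ?thesis using key unfolding y5_def y4_def y3_def y2_def R_def by linarith
  qed
  ultimately show ?thesis by (metis reach_trans)
qed

lemma csG:
  assumes "\<alpha> \<noteq> 0" "umin < 0" "0 < umax" "a \<noteq> 0"
  shows "cs_pre umin umax a 0 \<alpha> \<beta> G"
  unfolding cs_pre_def
proof (intro conjI ballI)
  show "G \<subseteq> G" by simp
next
  fix p assume p: "p \<in> G"
  obtain x y where xy: "p = (x, y)" by (cases p) auto
  have x: "x > 0" using p xy unfolding G_def by simp
  have "0 \<in> {umin..umax}" using assms by simp
  moreover have "\<forall>t\<ge>0. seg a \<alpha> \<beta> 0 x y t \<in> G" using x unfolding seg_def G_def by simp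
  ultimately show "\<exists>u \<gamma>. admissible umin umax u \<and> is_solution a 0 \<alpha> \<beta> p u \<gamma> \<and> (\<forall>t\<ge>0. \<gamma> t \<in> G)"
  proof (intro exI conjI)
    show "admissible umin umax (\<lambda>_. 0)" by (rule admissible_const) fact
    show "is_solution a 0 \<alpha> \<beta> p (\<lambda>_. 0) (seg a \<alpha> \<beta> 0 x y)" unfolding xy by (rule seg_sol[OF assms(1)])
  qed blast
next
  fix p assume p: "p \<in> G"
  obtain x y where xy: "p = (x, y)" by (cases p) auto
  have x: "x > 0" using p xy unfolding G_def by simp
  show "G \<subseteq> closure (orbit_pos umin umax a 0 \<alpha> \<beta> p) \<inter> G"
  proof
    fix q assume q: "q \<in> G"
    obtain x1 y1 where xy1: "q = (x1, y1)" by (cases q) auto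
    have x1: "x1 > 0" using q xy1 unfolding G_def by simp
    have "q \<in> orbit_pos umin umax a 0 \<alpha> \<beta> p"
      using controllable[OF assms x x1, of \<beta> y y1] xy xy1 unfolding reach_def by simp
    then show "q \<in> closure (orbit_pos umin umax a 0 \<alpha> \<beta> p) \<inter> G" using q closure_subset by blast
  qed
qed

theorem mainTheorem7:
  fixes umin umax a b \<alpha> \<beta> :: real
  assumes "umin < 0" and "0 < umax"
    and "(a, b) \<noteq> (0, 0)" and "(\<alpha>, \<beta>) \<noteq> (0, 0)"
    and "b = 0" and "\<alpha> \<noteq> 0" and "a \<noteq> 0"
  shows "\<forall>C. control_set umin umax a b \<alpha> \<beta> C \<longleftrightarrow> C = G"
proof
  fix C
  have cs: "cs_pre umin umax a b \<alpha> \<beta> G" using csG[OF assms(6,1,2,7)] assms(5) by simp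
  have sub: "D \<subseteq> G" if "cs_pre umin umax a b \<alpha> \<beta> D" for D using that unfolding cs_pre_def by blast
  show "control_set umin umax a b \<alpha> \<beta> C \<longleftrightarrow> C = G"
  proof
    assume "control_set umin umax a b \<alpha> \<beta> C"
    then have "cs_pre umin umax a b \<alpha> \<beta> C" "\<forall>D. cs_pre umin umax a b \<alpha> \<beta> D \<and> C \<subseteq> D \<longrightarrow> D = C"
      unfolding control_set_def by auto
    then have "cs_pre umin umax a b \<alpha> \<beta> G \<and> C \<subseteq> G \<longrightarrow> G = C" by blast
    then show "C = G" using cs sub[OF \<open>cs_pre umin umax a b \<alpha> \<beta> C\<close>] by simp
  next
    assume "C = G"
    then show "control_set umin umax a b \<alpha> \<beta> C"
      unfolding control_set_def using cs sub by auto
  qed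
qed

end
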